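(* Consider the networked feedback system described in the context, under the input assumption stated there, and let $d(k)=\sum_{i=0}^{\tau}\omega(k,k-i)u(k-i)$. Then: (1) $\mathbb E\{d^2(k)\}=\sum_{i=0}^{\tau}\alpha_i^2p_i(1-p_i)\mathbb E\{u^2(k-i)\}$; (2) for $1\le|k_1-k_2|\le\tau$, $\mathbb E\{d(k_1)d(k_2)\}=-\sum_{i_1,i_2=0}^{\tau}\delta(k_1-i_1-k_2+i_2)\alpha_{i_1}\alpha_{i_2}p_{i_1}p_{i_2}\mathbb E\{u^2(k_1-i_1)\}$; (3) for $|k_1-k_2|>\tau$, $\mathbb E\{d(k_1)d(k_2)\}=0$.
   Context: Setting: $P$ is a SISO discrete-time LTI plant which is strictly proper (relative degree $\ge1$), $K$ a proper SISO LTI controller. Let $\tau\ge0$ be an integer, $\mathcal D=\{0,\dots,\tau\}$, and $\{\tau_n\}$ an i.i.d. sequence with values in $\mathcal D$, $\Pr\{\tau_n=i\}=p_i$, $\sum_ip_i=1$. With real weights $\alpha_0,\dots,\alpha_\tau$ and Kronecker delta $\delta$, the channel maps $u$ to $u_d(k)=\sum_{i=0}^{\tau}\alpha_i\delta(\tau_{k-i}-i)u(k-i)$. Closed loop: plant input $v-u_d$, plant output $y$, $u=Ky$; signals real, system at rest at $k=0$ (signals vanish for $k<0$). Define $\omega(k,n)=\alpha_{k-n}[\delta(\tau_n-(k-n))-p_{k-n}]$ if $n\le k\le n+\tau$ and $\omega(k,n)=0$ otherwise. Input assumption: $\{\tau_n\}$ is independent of $\{v(k)\}$, and $\{v(k)\}$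 is zero-mean white noise (independent values) with bounded variances. *)

theory Defs
  imports "HOL-Probability.Probability"
begin

definition kdelta :: "int \<Rightarrow> real" where
  "kdelta m = (if m = 0 then 1 else 0)"

text \<open>Extension of a signal defined for times k >= 0 by zero to negative times
  (the system is at rest: signals vanish for k < 0).\<close>
definition sig_ext :: "(nat \<Rightarrow> 'a \<Rightarrow> real) \<Rightarrow> int \<Rightarrow> 'a \<Rightarrow> real" where
  "sig_ext s k x = (if k < 0 then 0 else s (nat k) x)"

definition omega ::
  "nat \<Rightarrow> (nat \<Rightarrow> real) \<Rightarrow> (nat \<Rightarrow> real) \<Rightarrow> (nat \<Rightarrow> 'a \<Rightarrow> nat) \<Rightarrow> nat \<Rightarrow> nat \<Rightarrow> 'a \<Rightarrow> real"
  where
  "omega tau \<alpha> p ts k n x =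
     (if n \<le> k \<and> k \<le> n + tau
      then \<alpha> (k - n) * (kdelta (int (ts n x) - int (k - n)) - p (k - n))
      else 0)"

text \<open>d(k) = sum_{i=0}^{tau} omega(k,k-i) u(k-i); terms with k - i < 0 vanish since u(k-i) = 0.\<close>
definition dsig ::
  "nat \<Rightarrow> (nat \<Rightarrow> real) \<Rightarrow> (nat \<Rightarrow> real) \<Rightarrow> (nat \<Rightarrow> 'a \<Rightarrow> nat) \<Rightarrow> (nat \<Rightarrow> 'a \<Rightarrow> real)
     \<Rightarrow> nat \<Rightarrow> 'a \<Rightarrow> real"
  where
  "dsig tau \<alpha> p ts u k x =
     (\<Sum>i\<le>tau. if i \<le> k then omega tau \<alpha> p ts k (k - i) x * u (k - i) x else 0)"

end

theory Submission
  imports Defs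
begin

locale L5 = prob_space M
  for M :: "'a measure" +
  fixes tau :: nat
    and \<alpha> p :: "nat \<Rightarrow> real"
    and ts :: "nat \<Rightarrow> 'a \<Rightarrow> nat"
    and v :: "nat \<Rightarrow> 'a \<Rightarrow> real"
  assumes ts_indep: "indep_vars (\<lambda>_. count_space UNIV) ts UNIV"
    and ts_v_indep: "indep_var
        (Pi\<^sub>M UNIV (\<lambda>_. borel)) (\<lambda>x. (\<lambda>n. real (ts n x)) :: nat \<Rightarrow> real)
        (Pi\<^sub>M UNIV (\<lambda>_. borel)) (\<lambda>x. (\<lambda>k. v k x) :: nat \<Rightarrow> real)"
    and ts_range: "\<And>n x. x \<in> space M \<Longrightarrow> ts n x \<le> tau"
    and ts_dist: "\<And>n i. i \<le> tau \<Longrightarrow> measure M {x \<in> space M. ts n x = i} = p i"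
    and p_sum: "(\<Sum>i\<le>tau. p i) = 1"
    and v_int: "\<And>k. integrable M (\<lambda>x. (v k x)\<^sup>2)"
  fixes u y ud :: "nat \<Rightarrow> 'a \<Rightarrow> real"
    and AP :: "real^'n^'n" and BP CP :: "real^'n" and xP :: "nat \<Rightarrow> 'a \<Rightarrow> real^'n"
    and AK :: "real^'m^'m" and BK CK :: "real^'m" and DK :: real
    and xK :: "nat \<Rightarrow> 'a \<Rightarrow> real^'m"
  assumes xP0: "\<And>x. xP 0 x = 0"
    and xPS: "\<And>k x. xP (Suc k) x = AP *v xP k x + (v k x - ud k x) *\<^sub>R BP"
    and yP: "\<And>k x. y k x = CP \<bullet> xP k x"
    and xK0: "\<And>x. xK 0 x = 0"
    and xKS: "\<And>k x. xK (Suc k) x = AK *v xK k x + y k x *\<^sub>R BK"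
    and uK: "\<And>k x. u k x = CK \<bullet> xK k x + DK * y k x"
    and ud_def: "\<And>k x. ud k x =
        (\<Sum>i\<le>tau. \<alpha> i * kdelta (int (ts (k - i) x) - int i) * sig_ext u (int k - int i) x)"
begin

abbreviation PB :: "(nat \<Rightarrow> real) measure" where "PB \<equiv> Pi\<^sub>M UNIV (\<lambda>_. borel)"

definition mk :: "nat \<Rightarrow> 'a \<Rightarrow> nat \<Rightarrow> real" where
  "mk n x = (\<lambda>m. if m < n then real (ts m x) else 0)"

definition mask :: "nat \<Rightarrow> (nat \<Rightarrow> real) \<Rightarrow> nat \<Rightarrow> real" where
  "mask n t = (\<lambda>m. if m < n then t m else 0)"

definition G :: "nat \<Rightarrow> 'a set set" where
  "G n = {{x\<in>space M. mk n x \<in> B \<and> (\<lambda>k. v k x) \<in> C} | B C. B \<in> sets PB \<and> C \<in> sets PB}"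

definition N :: "nat \<Rightarrow> 'a measure" where
  "N n = sigma (space M) (G n)"

lemma indep_var_prob:
  assumes "indep_var S X T Y" "A \<in> sets S" "B \<in> sets T"
  shows "prob (X -` A \<inter> space M \<inter> (Y -` B \<inter> space M)) = prob (X -` A \<inter> space M) * prob (Y -` B \<inter> space M)"
  using assms unfolding indep_var_eq
  by (intro indep_setD) (auto intro: sigma_sets.Basic)

lemma T_meas: "(\<lambda>x. (\<lambda>n. real (ts n x))) \<in> measurable M PB"
  using ts_v_indep unfolding indep_var_eq by auto

lemma V_meas: "(\<lambda>x. (\<lambda>k. v k x)) \<in> measurable M PB"
  using ts_v_indep unfolding indep_var_eq by auto

lemma mask_meas: "mask n \<in> measurable PB PB"
  unfolding mask_def
  by (rule measurable_PiM_single') (auto intro!: measurable_If)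

lemma mk_eq: "mk n x = mask n (\<lambda>m. real (ts m x))"
  by (simp add: mk_def mask_def)

lemma mk_meas: "mk n \<in> measurable M PB"
  unfolding mk_eq[abs_def] using measurable_comp[OF T_meas mask_meas] by (simp add: comp_def)

lemma ts_meas: "ts n \<in> measurable M (count_space UNIV)"
  using ts_indep unfolding indep_vars_def by auto

lemma G_sub: "G n \<subseteq> Pow (space M)"
  unfolding G_def by auto

lemma G_events: "G n \<subseteq> events"
proof
  fix X assume "X \<in> G n"
  then obtain B C where X: "X = {x\<in>space M. mk n x \<in> B \<and> (\<lambda>k. v k x) \<in> C}"
    and B: "B \<in> sets PB" and C: "C \<in> sets PB" unfolding G_def by auto
  have "X = (mk n -` B \<inter> space M) \<inter> ((\<lambda>x. (\<lambda>k. v k x)) -` C \<inter> space M)" using X by auto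
  also have "\<dots> \<in> events"
    using measurable_sets[OF mk_meas B] measurable_sets[OF V_meas C] by auto
  finally show "X \<in> events" .
qed

lemma G_Int_stable: "Int_stable (G n)"
proof (rule Int_stableI)
  fix X Y assume "X \<in> G n" "Y \<in> G n"
  then obtain B C B' C' where X: "X = {x\<in>space M. mk n x \<in> B \<and> (\<lambda>k. v k x) \<in> C}"
    and B: "B \<in> sets PB" and C: "C \<in> sets PB"
    and Y: "Y = {x\<in>space M. mk n x \<in> B' \<and> (\<lambda>k. v k x) \<in> C'}"
    and B': "B' \<in> sets PB" and C': "C' \<in> sets PB" unfolding G_def by blast
  have "X \<inter> Y = {x\<in>space M. mk n x \<in> B \<inter> B' \<and> (\<lambda>k. v k x) \<in> C \<inter> C'}"
    using X Y by auto
  then show "X \<inter> Y \<in> G n" unfolding G_def using B C B' C' by blast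
qed

lemma space_N: "space (N n) = space M"
  unfolding N_def using G_sub by simp

lemma sets_N: "sets (N n) = sigma_sets (space M) (G n)"
  unfolding N_def using G_sub by simp

lemma N_subalg: "subalgebra M (N n)"
  unfolding subalgebra_def using space_N sets_N G_events
  by (simp add: sets.sigma_sets_subset)

lemma ts_mk_indep: "indep_var PB (\<lambda>x. (\<lambda>m. real (ts n x))) PB (mk n)"
proof -
  have I: "indep_var (Pi\<^sub>M {n} (\<lambda>_. count_space UNIV)) (\<lambda>\<omega>. restrict (\<lambda>i. ts i \<omega>) {n})
      (Pi\<^sub>M {..<n} (\<lambda>_. count_space UNIV)) (\<lambda>\<omega>. restrict (\<lambda>i. ts i \<omega>) {..<n})"
    by (rule indep_var_restrict[OF ts_indep]) auto
  have m0: "(\<lambda>s. s n) \<in> measurable (Pi\<^sub>M {n} (\<lambda>_. count_space UNIV)) (count_space UNIV)"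
    by (rule measurable_component_singleton) auto
  have m1: "(\<lambda>s. (\<lambda>m::nat. real (s n))) \<in> measurable (Pi\<^sub>M {n} (\<lambda>_. count_space UNIV)) PB"
    by (rule measurable_PiM_single') (auto intro: measurable_compose[OF m0])
  have comp: "(\<lambda>s. if m < n then real (s m) else 0) \<in> measurable (Pi\<^sub>M {..<n} (\<lambda>_. count_space UNIV)) borel" for m
  proof (cases "m < n")
    case True
    have "(\<lambda>s. s m) \<in> measurable (Pi\<^sub>M {..<n} (\<lambda>_. count_space UNIV)) (count_space UNIV)"
      by (rule measurable_component_singleton) (use True in auto)
    then have "(\<lambda>s. real (s m)) \<in> measurable (Pi\<^sub>M {..<n} (\<lambda>_. count_space UNIV)) borel"
      by (rule measurable_compose) auto
    then show ?thesis using True by simp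
  qed simp
  have m2: "(\<lambda>s. (\<lambda>m. if m < n then real (s m) else 0)) \<in> measurable (Pi\<^sub>M {..<n} (\<lambda>_. count_space UNIV)) PB"
    by (rule measurable_PiM_single') (use comp in auto)
  have "indep_var PB ((\<lambda>s. (\<lambda>m::nat. real (s n))) \<circ> (\<lambda>\<omega>. restrict (\<lambda>i. ts i \<omega>) {n}))
      PB ((\<lambda>s. (\<lambda>m. if m < n then real (s m) else 0)) \<circ> (\<lambda>\<omega>. restrict (\<lambda>i. ts i \<omega>) {..<n}))"
    by (rule indep_var_compose[OF I m1 m2])
  also have "((\<lambda>s. (\<lambda>m::nat. real (s n))) \<circ> (\<lambda>\<omega>. restrict (\<lambda>i. ts i \<omega>) {n})) = (\<lambda>x. (\<lambda>m. real (ts n x)))"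
    by (auto simp: fun_eq_iff)
  also have "((\<lambda>s. (\<lambda>m. if m < n then real (s m) else 0)) \<circ> (\<lambda>\<omega>. restrict (\<lambda>i. ts i \<omega>) {..<n})) = mk n"
    by (auto simp: fun_eq_iff mk_def)
  finally show ?thesis .
qed

lemma prob_P1:
  assumes B: "B \<in> sets PB"
  shows "prob ({x\<in>space M. ts n x = j} \<inter> (mk n -` B \<inter> space M)) =
    prob {x\<in>space M. ts n x = j} * prob (mk n -` B \<inter> space M)"
proof -
  have e: "{x\<in>space M. ts n x = j} = (\<lambda>x. (\<lambda>m. real (ts n x))) -` ((\<lambda>t. t 0) -` {real j} \<inter> space PB) \<inter> space M" by (auto simp: space_PiM)
  have A: "(\<lambda>t. t 0) -` {real j} \<inter> space PB \<in> sets PB"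
    using measurable_sets[OF measurable_component_singleton[of 0 UNIV "\<lambda>_. borel"], of "{real j}"] by auto
  show ?thesis unfolding e
    by (rule indep_var_prob[OF ts_mk_indep A B])
qed

lemma prob_P2:
  assumes B: "B \<in> sets PB" and C: "C \<in> sets PB"
  shows "prob ({x\<in>space M. ts n x = j} \<inter> {x\<in>space M. mk n x \<in> B \<and> (\<lambda>k. v k x) \<in> C}) =
    prob {x\<in>space M. ts n x = j} * prob {x\<in>space M. mk n x \<in> B \<and> (\<lambda>k. v k x) \<in> C}"
proof -
  let ?T = "\<lambda>x. (\<lambda>m. real (ts m x))"
  let ?V = "\<lambda>x. (\<lambda>k. v k x)"
  define B' where "B' = ((\<lambda>t. t n) -` {real j} \<inter> space PB) \<inter> (mask n -` B \<inter> space PB)"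
  have B'm: "B' \<in> sets PB" unfolding B'_def
    using measurable_sets[OF mask_meas B] measurable_sets[OF measurable_component_singleton[of n UNIV "\<lambda>_. borel"], of "{real j}"]
    by auto
  have B''m: "mask n -` B \<inter> space PB \<in> sets PB"
    using measurable_sets[OF mask_meas B] .
  have e1: "{x\<in>space M. ts n x = j} \<inter> {x\<in>space M. mk n x \<in> B \<and> ?V x \<in> C} =
     ?T -` B' \<inter> space M \<inter> (?V -` C \<inter> space M)"
    by (auto simp: B'_def mk_eq space_PiM)
  have e2: "?T -` B' \<inter> space M = {x\<in>space M. ts n x = j} \<inter> (mk n -` B \<inter> space M)"
    by (auto simp: B'_def mk_eq space_PiM)
  have e3: "{x\<in>space M. mk n x \<in> B \<and> ?V x \<in> C} =
     ?T -` (mask n -` B \<inter> space PB) \<inter> space M \<inter> (?V -` C \<inter> space M)"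
    by (auto simp: mk_eq space_PiM)
  have e4: "?T -` (mask n -` B \<inter> space PB) \<inter> space M = mk n -` B \<inter> space M"
    by (auto simp: mk_eq space_PiM)
  have "prob ({x\<in>space M. ts n x = j} \<inter> {x\<in>space M. mk n x \<in> B \<and> ?V x \<in> C})
      = prob (?T -` B' \<inter> space M) * prob (?V -` C \<inter> space M)"
    unfolding e1 by (rule indep_var_prob[OF ts_v_indep B'm C])
  also have "\<dots> = prob {x\<in>space M. ts n x = j} * (prob (mk n -` B \<inter> space M) * prob (?V -` C \<inter> space M))"
    unfolding e2 prob_P1[OF B] by simp
  also have "prob (mk n -` B \<inter> space M) * prob (?V -` C \<inter> space M) = prob {x\<in>space M. mk n x \<in> B \<and> ?V x \<in> C}"
    using indep_var_prob[OF ts_v_indep B''m C] unfolding e3 e4 by simp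
  finally show ?thesis .
qed

lemma indep_core: "indep_set (sigma_sets (space M) {{x\<in>space M. ts n x = j}}) (sets (N n))"
proof -
  have "indep_set {{x\<in>space M. ts n x = j}} (G n)"
  proof (rule indep_setI)
    show "{{x \<in> space M. ts n x = j}} \<subseteq> events"
      using measurable_sets[OF ts_meas, of "{j}"] by (auto simp: vimage_def Int_def conj_commute)
    show "G n \<subseteq> events" by (rule G_events)
    fix a b assume "a \<in> {{x \<in> space M. ts n x = j}}" "b \<in> G n"
    then show "prob (a \<inter> b) = prob a * prob b"
      unfolding G_def using prob_P2 by auto
  qed
  then have "indep_set (sigma_sets (space M) {{x\<in>space M. ts n x = j}}) (sigma_sets (space M) (G n))"
    by (rule indep_set_sigma_sets) (use G_Int_stable in \<open>auto simp: Int_stable_def\<close>)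
  then show ?thesis by (simp add: sets_N)
qed

lemma indep_set_mono':
  assumes "indep_set A B" "A' \<subseteq> A" "B' \<subseteq> B"
  shows "indep_set A' B'"
  using assms unfolding indep_set_def
  by (rule_tac indep_sets_mono_sets) (auto split: bool.split)

lemma indep_integral:
  assumes Zm: "Z \<in> borel_measurable (N n)" and Zi: "integrable M Z"
  shows "(\<integral>x. indicator {x\<in>space M. ts n x = j} x * Z x \<partial>M) =
     prob {x\<in>space M. ts n x = j} * (\<integral>x. Z x \<partial>M)"
proof -
  let ?E = "{x\<in>space M. ts n x = j}"
  have Eev: "?E \<in> events"
    using measurable_sets[OF ts_meas, of "{j}"] by (auto simp: vimage_def Int_def conj_commute)
  have ZM: "Z \<in> borel_measurable M" by (rule measurable_from_subalg[OF N_subalg Zm])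
  have s1: "sigma_sets (space M) {indicator ?E -` A \<inter> space M | A. A \<in> sets (borel::real measure)}
      \<subseteq> sigma_sets (space M) {?E}"
  proof (rule sigma_sets_mono, safe)
    fix A :: "real set" and x
    let ?S = "sigma_sets (space M) {?E}"
    have e: "space M - {} \<in> ?S" by (rule sigma_sets.Compl) (rule sigma_sets.Empty)
    have c: "space M - ?E \<in> ?S" by (rule sigma_sets.Compl) (rule sigma_sets.Basic, simp)
    have b: "?E \<in> ?S" by (rule sigma_sets.Basic) simp
    have "indicator ?E -` A \<inter> space M =
       (if 1 \<in> A then (if 0 \<in> A then space M else ?E) else (if 0 \<in> A then space M - ?E else {}))"
      by (auto simp: indicator_def of_bool_def split: if_splits)
    then show "indicator ?E -` A \<inter> space M \<in> ?S"
      using e b c by (auto intro: sigma_sets.Empty)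
  qed
  have s2: "sigma_sets (space M) {Z -` A \<inter> space M | A. A \<in> sets (borel::real measure)} \<subseteq> sets (N n)"
  proof -
    have "{Z -` A \<inter> space M | A. A \<in> sets (borel::real measure)} \<subseteq> sigma_sets (space M) (G n)"
      using measurable_sets[OF Zm] by (auto simp: space_N sets_N)
    then show ?thesis unfolding sets_N by (rule sigma_sets_mono)
  qed
  have ind: "indep_var borel (indicator ?E) borel Z"
    unfolding indep_var_eq
    using indep_set_mono'[OF indep_core s1 s2] Eev ZM by auto
  have "(\<integral>x. indicator ?E x * Z x \<partial>M) = (\<integral>x. indicator ?E x \<partial>M) * (\<integral>x. Z x \<partial>M)"
    by (rule indep_var_lebesgue_integral[OF ind _ Zi]) (use Eev in \<open>auto intro!: integrable_real_indicator simp: emeasure_eq_measure\<close>)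
  then show ?thesis using Eev by simp
qed

lemma indep_integral_fun:
  assumes Zm: "Z \<in> borel_measurable (N n)" and Zi: "integrable M Z"
  shows "(\<integral>x. g (ts n x) * Z x \<partial>M) =
     (\<Sum>j\<le>tau. g j * prob {x\<in>space M. ts n x = j}) * (\<integral>x. Z x \<partial>M)"
proof -
  have Eev: "{x\<in>space M. ts n x = j} \<in> events" for j
    using measurable_sets[OF ts_meas, of "{j}"] by (auto simp: vimage_def Int_def conj_commute)
  have "(\<integral>x. g (ts n x) * Z x \<partial>M) =
      (\<integral>x. (\<Sum>j\<le>tau. g j * (Z x * indicator {x\<in>space M. ts n x = j} x)) \<partial>M)"
  proof (rule Bochner_Integration.integral_cong[OF refl])
    fix x assume x: "x \<in> space M"
    have "(\<Sum>j\<le>tau. g j * (Z x * indicator {x\<in>space M. ts n x = j} x)) =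
        (\<Sum>j\<in>{ts n x}. g j * (Z x * indicator {x\<in>space M. ts n x = j} x))"
      by (rule sum.mono_neutral_right) (use x ts_range in \<open>auto simp: indicator_def\<close>)
    then show "g (ts n x) * Z x = (\<Sum>j\<le>tau. g j * (Z x * indicator {x\<in>space M. ts n x = j} x))"
      using x by (simp add: indicator_def)
  qed
  also have "\<dots> = (\<Sum>j\<le>tau. (\<integral>x. g j * (Z x * indicator {x\<in>space M. ts n x = j} x) \<partial>M))"
    by (rule Bochner_Integration.integral_sum) (auto intro!: integrable_mult_right integrable_real_mult_indicator Zi Eev)
  also have "\<dots> = (\<Sum>j\<le>tau. g j * (\<integral>x. Z x * indicator {x\<in>space M. ts n x = j} x \<partial>M))"
    by simp
  also have "\<dots> = (\<Sum>j\<le>tau. g j * (prob {x\<in>space M. ts n x = j} * (\<integral>x. Z x \<partial>M)))"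
    using indep_integral[OF Zm Zi] by (simp add: mult.commute)
  also have "\<dots> = (\<Sum>j\<le>tau. g j * prob {x\<in>space M. ts n x = j}) * (\<integral>x. Z x \<partial>M)"
    by (simp add: sum_distrib_right mult.assoc)
  finally show ?thesis .
qed

lemma v_measN: "v k \<in> borel_measurable (N n)"
proof (rule measurableI)
  fix A :: "real set" assume A: "A \<in> sets borel"
  have "v k -` A \<inter> space (N n) = {x\<in>space M. mk n x \<in> space PB \<and> (\<lambda>k. v k x) \<in> ((\<lambda>w. w k) -` A \<inter> space PB)}"
    by (auto simp: space_N space_PiM)
  also have "\<dots> \<in> G n" unfolding G_def
    using measurable_sets[OF measurable_component_singleton[of k UNIV "\<lambda>_. borel"] A] by blast
  finally show "v k -` A \<inter> space (N n) \<in> sets (N n)" unfolding sets_N by auto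
qed auto

lemma ts_measN: "m < n \<Longrightarrow> ts m \<in> measurable (N n) (count_space UNIV)"
proof (rule measurableI)
  fix A :: "nat set" assume m: "m < n"
  have RA: "real ` A \<in> sets borel" by (rule sets.countable) auto
  have "ts m -` A \<inter> space (N n) = {x\<in>space M. mk n x \<in> ((\<lambda>t. t m) -` (real ` A) \<inter> space PB) \<and> (\<lambda>k. v k x) \<in> space PB}"
    using m by (auto simp: space_N space_PiM mk_def)
  also have "\<dots> \<in> G n" unfolding G_def
    using measurable_sets[OF measurable_component_singleton[of m UNIV "\<lambda>_. borel"] RA] by blast
  finally show "ts m -` A \<inter> space (N n) \<in> sets (N n)" unfolding sets_N by auto
qed auto

lemma matv_meas: "f \<in> borel_measurable K \<Longrightarrow> (\<lambda>x. (A::real^'c^'b) *v f x) \<in> borel_measurable K"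
  by (rule borel_measurable_continuous_on[where f="(*v) A"])
     (auto intro: linear_continuous_on matrix_vector_mul_bounded_linear)

lemma u_measN_aux:
  assumes H: "\<And>k. k \<le> m \<Longrightarrow> xP k \<in> borel_measurable (N n) \<and> xK k \<in> borel_measurable (N n)"
    and k: "k \<le> m"
  shows "u k \<in> borel_measurable (N n)"
proof -
  have "u k = (\<lambda>x. CK \<bullet> xK k x + DK * (CP \<bullet> xP k x))" by (auto simp: uK yP fun_eq_iff)
  then show ?thesis using H[OF k]
    by (simp add: borel_measurable_add borel_measurable_times borel_measurable_inner)
qed

lemma sys_measN:
  "m \<le> n \<Longrightarrow> (\<forall>k\<le>m. xP k \<in> borel_measurable (N n) \<and> xK k \<in> borel_measurable (N n))"
proof (induction m)
  case 0
  then show ?case by (auto simp: xP0 xK0 fun_eq_iff[symmetric] intro: measurable_const)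
next
  case (Suc m)
  then have IH: "\<And>k. k \<le> m \<Longrightarrow> xP k \<in> borel_measurable (N n) \<and> xK k \<in> borel_measurable (N n)" by auto
  have um: "\<And>k. k \<le> m \<Longrightarrow> u k \<in> borel_measurable (N n)" by (rule u_measN_aux[OF IH])
  have tsm: "\<And>i. (\<lambda>x. kdelta (int (ts (m - i) x) - int i)) \<in> borel_measurable (N n)"
  proof -
    fix i
    have "(\<lambda>t. kdelta (int t - int i)) \<circ> ts (m - i) \<in> borel_measurable (N n)"
      by (rule measurable_comp[OF ts_measN]) (use Suc.prems in auto)
    then show "(\<lambda>x. kdelta (int (ts (m - i) x) - int i)) \<in> borel_measurable (N n)" by (simp add: comp_def)
  qed
  have sm: "\<And>i. (\<lambda>x. sig_ext u (int m - int i) x) \<in> borel_measurable (N n)"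
  proof -
    fix i
    show "(\<lambda>x. sig_ext u (int m - int i) x) \<in> borel_measurable (N n)"
    proof (cases "int m - int i < 0")
      case True then show ?thesis by (simp add: sig_ext_def)
    next
      case False
      then have "nat (int m - int i) \<le> m" by simp
      with um show ?thesis using False by (simp add: sig_ext_def)
    qed
  qed
  have udm: "ud m \<in> borel_measurable (N n)"
  proof -
    have "ud m = (\<lambda>x. \<Sum>i\<le>tau. \<alpha> i * kdelta (int (ts (m - i) x) - int i) * sig_ext u (int m - int i) x)"
      by (auto simp: ud_def fun_eq_iff)
    also have "\<dots> \<in> borel_measurable (N n)"
      using tsm sm by (intro borel_measurable_sum borel_measurable_times borel_measurable_const) auto
    finally show ?thesis .
  qed
  have yk: "y m \<in> borel_measurable (N n)"
  proof -
    have "y m = (\<lambda>x. CP \<bullet> xP m x)" by (auto simp: yP fun_eq_iff)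
    then show ?thesis using IH[of m] by (simp add: borel_measurable_inner)
  qed
  have "xP (Suc m) = (\<lambda>x. AP *v xP m x + (v m x - ud m x) *\<^sub>R BP)" by (auto simp: xPS fun_eq_iff)
  also have "\<dots> \<in> borel_measurable (N n)"
    using IH[of m] udm v_measN by (intro borel_measurable_add matv_meas borel_measurable_scaleR) auto
  finally have P: "xP (Suc m) \<in> borel_measurable (N n)" .
  have "xK (Suc m) = (\<lambda>x. AK *v xK m x + y m x *\<^sub>R BK)" by (auto simp: xKS fun_eq_iff)
  also have "\<dots> \<in> borel_measurable (N n)"
    using IH[of m] yk by (intro borel_measurable_add matv_meas borel_measurable_scaleR) auto
  finally have K: "xK (Suc m) \<in> borel_measurable (N n)" .
  show ?case using IH P K le_Suc_eq by auto
qed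

lemma u_measN: "m \<le> n \<Longrightarrow> u m \<in> borel_measurable (N n)"
  using sys_measN[of m n] by (intro u_measN_aux[of m]) auto

definition Bv :: "nat \<Rightarrow> 'a \<Rightarrow> real" where
  "Bv m x = (\<Sum>j<m. \<bar>v j x\<bar>)"

definition dmn :: "nat \<Rightarrow> ('a \<Rightarrow> 'b::real_normed_vector) \<Rightarrow> bool" where
  "dmn m f \<longleftrightarrow> (\<exists>C\<ge>0. \<forall>x. norm (f x) \<le> C * Bv m x)"

lemma Bv_nonneg: "0 \<le> Bv m x"
  unfolding Bv_def by (auto intro: sum_nonneg)

lemma Bv_mono: "m \<le> m' \<Longrightarrow> Bv m x \<le> Bv m' x"
  unfolding Bv_def by (rule sum_mono2) auto

lemma dmn_mono: "dmn m f \<Longrightarrow> m \<le> m' \<Longrightarrow> dmn m' f"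
  unfolding dmn_def
  by (metis (no_types, opaque_lifting) Bv_mono mult_left_mono order_trans)

lemma dmn_zero: "dmn m (\<lambda>x. 0)"
  unfolding dmn_def by (auto intro: exI[of _ 0])

lemma dmn_add: "dmn m f \<Longrightarrow> dmn m g \<Longrightarrow> dmn m (\<lambda>x. f x + g x)"
  unfolding dmn_def
proof (elim exE conjE)
  fix C1 C2 assume "0 \<le> C1" "\<forall>x. norm (f x) \<le> C1 * Bv m x" "0 \<le> C2" "\<forall>x. norm (g x) \<le> C2 * Bv m x"
  then show "\<exists>C\<ge>0. \<forall>x. norm (f x + g x) \<le> C * Bv m x"
    by (intro exI[of _ "C1 + C2"]) (auto simp: distrib_right intro: order_trans[OF norm_triangle_ineq] add_mono)
qed

lemma dmn_diff: "dmn m f \<Longrightarrow> dmn m g \<Longrightarrow> dmn m (\<lambda>x. f x - g x)"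
  unfolding dmn_def
proof (elim exE conjE)
  fix C1 C2 assume "0 \<le> C1" "\<forall>x. norm (f x) \<le> C1 * Bv m x" "0 \<le> C2" "\<forall>x. norm (g x) \<le> C2 * Bv m x"
  then show "\<exists>C\<ge>0. \<forall>x. norm (f x - g x) \<le> C * Bv m x"
    by (intro exI[of _ "C1 + C2"]) (auto simp: distrib_right intro: order_trans[OF norm_triangle_ineq4] add_mono)
qed

lemma dmn_v: "k < m \<Longrightarrow> dmn m (v k)"
  unfolding dmn_def Bv_def
  by (intro exI[of _ 1]) (auto intro!: member_le_sum)

lemma dmn_matv: "dmn m f \<Longrightarrow> dmn m (\<lambda>x. (A::real^'c^'b) *v f x)"
proof -
  assume "dmn m f"
  then obtain C where C: "C \<ge> 0" "\<And>x. norm (f x) \<le> C * Bv m x" unfolding dmn_def by auto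
  obtain K where K: "K > 0" "\<And>z. norm (A *v z) \<le> norm z * K"
    using bounded_linear.pos_bounded[OF matrix_vector_mul_bounded_linear[of A]] by auto
  have "norm (A *v f x) \<le> (K * C) * Bv m x" for x
  proof -
    have "norm (A *v f x) \<le> norm (f x) * K" by (rule K(2))
    also have "\<dots> \<le> (C * Bv m x) * K" using C(2)[of x] K(1) by (intro mult_right_mono) auto
    finally show ?thesis by (simp add: ac_simps)
  qed
  then show ?thesis unfolding dmn_def using C K by (intro exI[of _ "K * C"]) auto
qed

lemma dmn_inner: "dmn m f \<Longrightarrow> dmn m (\<lambda>x. c \<bullet> f x)"
proof -
  assume "dmn m f"
  then obtain C where C: "C \<ge> 0" "\<And>x. norm (f x) \<le> C * Bv m x" unfolding dmn_def by auto
  have "norm (c \<bullet> f x) \<le> (norm c * C) * Bv m x" for x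
  proof -
    have "norm (c \<bullet> f x) \<le> norm c * norm (f x)" using Cauchy_Schwarz_ineq2[of c "f x"] by simp
    also have "\<dots> \<le> norm c * (C * Bv m x)" using C(2)[of x] by (intro mult_left_mono) auto
    finally show ?thesis by (simp add: ac_simps)
  qed
  then show ?thesis unfolding dmn_def using C by (intro exI[of _ "norm c * C"]) auto
qed

lemma dmn_scaleR: "dmn m (r :: 'a \<Rightarrow> real) \<Longrightarrow> dmn m (\<lambda>x. r x *\<^sub>R b)"
proof -
  assume "dmn m r"
  then obtain C where C: "C \<ge> 0" "\<And>x. norm (r x) \<le> C * Bv m x" unfolding dmn_def by auto
  have "norm (r x *\<^sub>R b) \<le> (norm b * C) * Bv m x" for x
  proof -
    have "norm (r x *\<^sub>R b) = norm b * norm (r x)" by simp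
    also have "\<dots> \<le> norm b * (C * Bv m x)" using C(2)[of x] by (intro mult_left_mono) auto
    finally show ?thesis by (simp add: ac_simps)
  qed
  then show ?thesis unfolding dmn_def using C by (intro exI[of _ "norm b * C"]) auto
qed

lemma dmn_mult_bdd:
  assumes g: "\<And>x. \<bar>g x\<bar> \<le> K" and f: "dmn m (f :: 'a \<Rightarrow> real)"
  shows "dmn m (\<lambda>x. g x * f x)"
proof -
  obtain C where C: "C \<ge> 0" "\<And>x. norm (f x) \<le> C * Bv m x" using f unfolding dmn_def by auto
  have K0: "K \<ge> 0" using g[of undefined] by simp
  have "norm (g x * f x) \<le> (K * C) * Bv m x" for x
  proof -
    have "norm (g x * f x) = \<bar>g x\<bar> * norm (f x)" by (simp add: abs_mult)
    also have "\<dots> \<le> K * (C * Bv m x)" using C(2)[of x] g[of x] by (intro mult_mono) auto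
    finally show ?thesis by (simp add: ac_simps)
  qed
  then show ?thesis unfolding dmn_def using C K0 by (intro exI[of _ "K * C"]) auto
qed

lemma dmn_sum: "finite I \<Longrightarrow> (\<And>i. i \<in> I \<Longrightarrow> dmn m (f i)) \<Longrightarrow> dmn m (\<lambda>x. \<Sum>i\<in>I. f i x)"
  by (induction I rule: finite_induct) (auto intro: dmn_zero dmn_add)

lemma kd_le1: "\<bar>kdelta z\<bar> \<le> 1"
  by (simp add: kdelta_def)

lemma sys_dmn: "\<forall>k\<le>m. dmn k (xP k) \<and> dmn k (xK k)"
proof (induction m)
  case 0
  have "xP 0 = (\<lambda>x. 0)" "xK 0 = (\<lambda>x. 0)" by (auto simp: xP0 xK0)
  moreover have "dmn 0 (\<lambda>x. 0::real^'n)" "dmn 0 (\<lambda>x. 0::real^'m)" by (rule dmn_zero)+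
  ultimately show ?case by auto
next
  case (Suc m)
  then have IH: "\<And>k. k \<le> m \<Longrightarrow> dmn k (xP k) \<and> dmn k (xK k)" by auto
  have um: "dmn m (u k)" if "k \<le> m" for k
  proof -
    have "u k = (\<lambda>x. CK \<bullet> xK k x + DK * (CP \<bullet> xP k x))" by (auto simp: uK yP fun_eq_iff)
    moreover have "dmn m (\<lambda>x. CK \<bullet> xK k x + DK * (CP \<bullet> xP k x))"
      using IH[OF that] that
      by (intro dmn_add dmn_inner dmn_mult_bdd[of _ "\<bar>DK\<bar>"]) (auto intro: dmn_mono)
    ultimately show ?thesis by simp
  qed
  have sm: "dmn m (\<lambda>x. sig_ext u (int m - int i) x)" for i
  proof (cases "int m - int i < 0")
    case True then show ?thesis by (simp add: sig_ext_def dmn_zero)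
  next
    case False
    then have "nat (int m - int i) \<le> m" by simp
    with um show ?thesis using False by (simp add: sig_ext_def)
  qed
  have udm: "dmn m (ud m)"
  proof -
    have "ud m = (\<lambda>x. \<Sum>i\<le>tau. (\<alpha> i * kdelta (int (ts (m - i) x) - int i)) * sig_ext u (int m - int i) x)"
      by (auto simp: ud_def fun_eq_iff)
    moreover have "dmn m \<dots>"
    proof (intro dmn_sum, simp)
      fix i
      show "dmn m (\<lambda>x. (\<alpha> i * kdelta (int (ts (m - i) x) - int i)) * sig_ext u (int m - int i) x)"
      proof (rule dmn_mult_bdd[OF _ sm])
        fix x show "\<bar>\<alpha> i * kdelta (int (ts (m - i) x) - int i)\<bar> \<le> \<bar>\<alpha> i\<bar>"
          using kd_le1 by (auto simp: abs_mult intro: mult_left_le)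
      qed
    qed
    ultimately show ?thesis by simp
  qed
  have ym: "dmn m (y m)"
  proof -
    have "y m = (\<lambda>x. CP \<bullet> xP m x)" by (auto simp: yP fun_eq_iff)
    then show ?thesis using IH[of m] by (simp add: dmn_inner)
  qed
  have "xP (Suc m) = (\<lambda>x. AP *v xP m x + (v m x - ud m x) *\<^sub>R BP)" by (auto simp: xPS fun_eq_iff)
  moreover have "dmn (Suc m) \<dots>"
    using IH[of m] udm dmn_v[of m "Suc m"]
    by (intro dmn_add dmn_matv dmn_scaleR dmn_diff) (auto intro: dmn_mono)
  ultimately have P: "dmn (Suc m) (xP (Suc m))" by simp
  have "xK (Suc m) = (\<lambda>x. AK *v xK m x + y m x *\<^sub>R BK)" by (auto simp: xKS fun_eq_iff)
  moreover have "dmn (Suc m) \<dots>"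
    using IH[of m] ym
    by (intro dmn_add dmn_matv dmn_scaleR) (auto intro: dmn_mono)
  ultimately have K: "dmn (Suc m) (xK (Suc m))" by simp
  show ?case using IH P K le_Suc_eq by auto
qed

lemma u_dmn: "dmn m (u m)"
proof -
  have "u m = (\<lambda>x. CK \<bullet> xK m x + DK * (CP \<bullet> xP m x))" by (auto simp: uK yP fun_eq_iff)
  moreover have "dmn m (\<lambda>x. CK \<bullet> xK m x + DK * (CP \<bullet> xP m x))"
    using sys_dmn[of m]
    by (intro dmn_add dmn_inner dmn_mult_bdd[of _ "\<bar>DK\<bar>"]) auto
  ultimately show ?thesis by simp
qed

lemma int_prod:
  assumes fm: "f \<in> borel_measurable M" and gm: "g \<in> borel_measurable M"
    and fd: "dmn a (f :: 'a \<Rightarrow> real)" and gd: "dmn b (g :: 'a \<Rightarrow> real)"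
  shows "integrable M (\<lambda>x. f x * g x)"
proof -
  let ?K = "max a b"
  obtain C1 where C1: "C1 \<ge> 0" "\<And>x. norm (f x) \<le> C1 * Bv ?K x"
    using dmn_mono[OF fd, of ?K] unfolding dmn_def by auto
  obtain C2 where C2: "C2 \<ge> 0" "\<And>x. norm (g x) \<le> C2 * Bv ?K x"
    using dmn_mono[OF gd, of ?K] unfolding dmn_def by auto
  show ?thesis
  proof (rule Bochner_Integration.integrable_bound)
    show "integrable M (\<lambda>x. C1 * C2 * real ?K * (\<Sum>j<?K. (v j x)\<^sup>2))"
      by (intro integrable_mult_right Bochner_Integration.integrable_sum v_int)
    show "(\<lambda>x. f x * g x) \<in> borel_measurable M" using fm gm by simp
    show "AE x in M. norm (f x * g x) \<le> norm (C1 * C2 * real ?K * (\<Sum>j<?K. (v j x)\<^sup>2))"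
    proof (rule AE_I2)
      fix x
      have B2: "(Bv ?K x)\<^sup>2 \<le> (\<Sum>j<?K. (v j x)\<^sup>2) * real ?K"
        using sum_squared_le_sum_of_squares[of "\<lambda>j. \<bar>v j x\<bar>" "{..<?K}"] by (simp add: Bv_def)
      have "norm (f x * g x) = norm (f x) * norm (g x)" by (simp add: abs_mult)
      also have "\<dots> \<le> (C1 * Bv ?K x) * (C2 * Bv ?K x)"
        using C1 C2 Bv_nonneg[of ?K x] by (intro mult_mono) auto
      also have "\<dots> = C1 * C2 * (Bv ?K x)\<^sup>2" by (simp add: power2_eq_square ac_simps)
      also have "\<dots> \<le> C1 * C2 * ((\<Sum>j<?K. (v j x)\<^sup>2) * real ?K)"
        using B2 C1 C2 by (intro mult_left_mono) auto
      also have "\<dots> \<le> norm (C1 * C2 * real ?K * (\<Sum>j<?K. (v j x)\<^sup>2))"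
        by (simp add: ac_simps)
      finally show "norm (f x * g x) \<le> norm (C1 * C2 * real ?K * (\<Sum>j<?K. (v j x)\<^sup>2))" .
    qed
  qed
qed

definition wfun :: "nat \<Rightarrow> nat \<Rightarrow> real" where
  "wfun i t = \<alpha> i * ((if t = i then 1 else 0) - p i)"

definition Dt :: "nat \<Rightarrow> nat \<Rightarrow> 'a \<Rightarrow> real" where
  "Dt k i x = (if i \<le> k then omega tau \<alpha> p ts k (k - i) x * u (k - i) x else 0)"

lemma Dt_eq: "i \<le> tau \<Longrightarrow> Dt k i x = (if i \<le> k then wfun i (ts (k - i) x) * u (k - i) x else 0)"
  by (auto simp: Dt_def omega_def wfun_def kdelta_def)

lemma dsig_eq: "dsig tau \<alpha> p ts u k x = (\<Sum>i\<le>tau. Dt k i x)"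
  by (simp add: dsig_def Dt_def)

lemma wfun_bdd: "\<bar>wfun i t\<bar> \<le> \<bar>\<alpha> i\<bar> * (1 + \<bar>p i\<bar>)"
proof -
  have "\<bar>(if t = i then 1 else 0) - p i\<bar> \<le> 1 + \<bar>p i\<bar>" by auto
  then show ?thesis unfolding wfun_def abs_mult by (intro mult_left_mono) auto
qed

lemma u_meas: "u m \<in> borel_measurable M"
  by (rule measurable_from_subalg[OF N_subalg u_measN[of m m]]) simp

lemma ts_measN': "m < n \<Longrightarrow> (\<lambda>x. g (ts m x)) \<in> borel_measurable (N n)"
  using measurable_comp[OF ts_measN[of m n], of g borel] by (simp add: comp_def)

lemma Dt_measN:
  assumes "i \<le> tau" "k - i < n"
  shows "Dt k i \<in> borel_measurable (N n)"
proof -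
  have "Dt k i = (\<lambda>x. if i \<le> k then wfun i (ts (k - i) x) * u (k - i) x else 0)"
    using assms by (auto simp: Dt_eq fun_eq_iff)
  also have "\<dots> \<in> borel_measurable (N n)"
    using assms ts_measN'[of "k - i" n "wfun i"] u_measN[of "k - i" n] by auto
  finally show ?thesis .
qed

lemma Dt_meas: "i \<le> tau \<Longrightarrow> Dt k i \<in> borel_measurable M"
  by (rule measurable_from_subalg[OF N_subalg Dt_measN[of i k "Suc (k - i)"]]) auto

lemma Dt_dmn: "i \<le> tau \<Longrightarrow> dmn k (Dt k i)"
proof (cases "i \<le> k")
  case True
  assume i: "i \<le> tau"
  have "Dt k i = (\<lambda>x. wfun i (ts (k - i) x) * u (k - i) x)" using True i by (auto simp: Dt_eq fun_eq_iff)
  moreover have "dmn k (\<lambda>x. wfun i (ts (k - i) x) * u (k - i) x)"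
    by (rule dmn_mult_bdd[OF wfun_bdd]) (rule dmn_mono[OF u_dmn], simp)
  ultimately show ?thesis by simp
next
  case False
  then have "Dt k i = (\<lambda>x. 0)" by (auto simp: Dt_def fun_eq_iff)
  then show ?thesis by (simp add: dmn_zero)
qed

lemma Dt_int: "i1 \<le> tau \<Longrightarrow> i2 \<le> tau \<Longrightarrow> integrable M (\<lambda>x. Dt k1 i1 x * Dt k2 i2 x)"
  by (rule int_prod[OF Dt_meas Dt_meas Dt_dmn Dt_dmn])

lemma prob_ts: "j \<le> tau \<Longrightarrow> prob {x\<in>space M. ts n x = j} = p j"
  by (rule ts_dist)

lemma S1:
  assumes "i \<le> tau"
  shows "(\<Sum>j\<le>tau. wfun i j * p j) = 0"
proof -
  have "(\<Sum>j\<le>tau. wfun i j * p j) = (\<Sum>j\<le>tau. \<alpha> i * (if j = i then p j else 0) - (\<alpha> i * p i) * p j)"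
    by (rule sum.cong) (auto simp: wfun_def algebra_simps)
  also have "\<dots> = \<alpha> i * (\<Sum>j\<le>tau. (if j = i then p j else 0)) - (\<alpha> i * p i) * (\<Sum>j\<le>tau. p j)"
    by (simp only: sum_subtractf sum_distrib_left[symmetric])
  also have "\<dots> = 0" using assms p_sum by (simp add: sum.delta)
  finally show ?thesis .
qed

lemma S2:
  assumes "i1 \<le> tau" "i2 \<le> tau"
  shows "(\<Sum>j\<le>tau. (wfun i1 j * wfun i2 j) * p j) =
     \<alpha> i1 * \<alpha> i2 * (if i1 = i2 then p i1 * (1 - p i1) else - (p i1 * p i2))"
proof -
  have "(\<Sum>j\<le>tau. (wfun i1 j * wfun i2 j) * p j) = (\<Sum>j\<le>tau. (\<alpha> i1 * \<alpha> i2) * (if j = i1 \<and> j = i2 then p j else 0)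
       - (\<alpha> i1 * \<alpha> i2 * p i2) * (if j = i1 then p j else 0) - (\<alpha> i1 * \<alpha> i2 * p i1) * (if j = i2 then p j else 0)
       + (\<alpha> i1 * \<alpha> i2 * p i1 * p i2) * p j)"
    by (rule sum.cong) (auto simp: wfun_def algebra_simps)
  also have "\<dots> = (\<alpha> i1 * \<alpha> i2) * (\<Sum>j\<le>tau. (if j = i1 \<and> j = i2 then p j else 0))
       - (\<alpha> i1 * \<alpha> i2 * p i2) * (\<Sum>j\<le>tau. (if j = i1 then p j else 0)) - (\<alpha> i1 * \<alpha> i2 * p i1) * (\<Sum>j\<le>tau. (if j = i2 then p j else 0))
       + (\<alpha> i1 * \<alpha> i2 * p i1 * p i2) * (\<Sum>j\<le>tau. p j)"
    by (simp only: sum.distrib sum_subtractf sum_distrib_left[symmetric])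
  also have "\<dots> = \<alpha> i1 * \<alpha> i2 * ((if i1 = i2 then p i1 else 0) - p i2 * p i1 - p i1 * p i2 + p i1 * p i2)"
  proof -
    have "(\<Sum>j\<le>tau. (if j = i1 \<and> j = i2 then p j else 0)) = (if i1 = i2 then p i1 else 0)"
      using assms by (cases "i1 = i2") (auto simp: sum.delta intro!: sum.neutral)
    then show ?thesis using assms p_sum by (simp add: sum.delta algebra_simps)
  qed
  finally show ?thesis by (auto simp: algebra_simps)
qed

lemma ED_cross:
  assumes i1: "i1 \<le> tau" and i2: "i2 \<le> tau" and k1: "i1 \<le> k1" and k2: "i2 \<le> k2"
    and lt: "k2 - i2 < k1 - i1"
  shows "(\<integral>x. Dt k1 i1 x * Dt k2 i2 x \<partial>M) = 0"
proof -
  let ?a = "k1 - i1"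
  have "(\<integral>x. Dt k1 i1 x * Dt k2 i2 x \<partial>M) = (\<integral>x. wfun i1 (ts ?a x) * (u ?a x * Dt k2 i2 x) \<partial>M)"
    using i1 k1 by (intro Bochner_Integration.integral_cong) (auto simp: Dt_eq)
  also have "\<dots> = (\<Sum>j\<le>tau. wfun i1 j * prob {x\<in>space M. ts ?a x = j}) * (\<integral>x. u ?a x * Dt k2 i2 x \<partial>M)"
  proof (rule indep_integral_fun)
    show "(\<lambda>x. u ?a x * Dt k2 i2 x) \<in> borel_measurable (N ?a)"
      using u_measN[of ?a ?a] Dt_measN[OF i2 lt] by simp
    show "integrable M (\<lambda>x. u ?a x * Dt k2 i2 x)"
      by (rule int_prod[OF u_meas Dt_meas[OF i2] u_dmn Dt_dmn[OF i2]])
  qed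
  also have "(\<Sum>j\<le>tau. wfun i1 j * prob {x\<in>space M. ts ?a x = j}) = 0"
    using S1[OF i1] by (simp add: prob_ts)
  finally show ?thesis by simp
qed

lemma ED:
  assumes i1: "i1 \<le> tau" and i2: "i2 \<le> tau"
  shows "(\<integral>x. Dt k1 i1 x * Dt k2 i2 x \<partial>M) =
    (if i1 \<le> k1 \<and> i2 \<le> k2 \<and> k1 - i1 = k2 - i2
     then \<alpha> i1 * \<alpha> i2 * (if i1 = i2 then p i1 * (1 - p i1) else - (p i1 * p i2)) * (\<integral>x. (u (k1 - i1) x)\<^sup>2 \<partial>M)
     else 0)"
proof (cases "i1 \<le> k1 \<and> i2 \<le> k2")
  case False
  then have e: "(\<lambda>x. Dt k1 i1 x * Dt k2 i2 x) = (\<lambda>x. 0)" by (auto simp: Dt_def fun_eq_iff)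
  have c: "\<not> (i1 \<le> k1 \<and> i2 \<le> k2 \<and> k1 - i1 = k2 - i2)" using False by auto
  show ?thesis unfolding if_not_P[OF c] e by simp
next
  case True
  then have k1: "i1 \<le> k1" and k2: "i2 \<le> k2" by auto
  let ?a = "k1 - i1" and ?b = "k2 - i2"
  consider "?a = ?b" | "?b < ?a" | "?a < ?b" by linarith
  then show ?thesis
  proof cases
    case 1
    have "(\<integral>x. Dt k1 i1 x * Dt k2 i2 x \<partial>M) = (\<integral>x. (wfun i1 (ts ?a x) * wfun i2 (ts ?a x)) * (u ?a x)\<^sup>2 \<partial>M)"
      using i1 k1 i2 k2 1 by (intro Bochner_Integration.integral_cong) (auto simp: Dt_eq power2_eq_square)
    also have "\<dots> = (\<Sum>j\<le>tau. (wfun i1 j * wfun i2 j) * prob {x\<in>space M. ts ?a x = j}) * (\<integral>x. (u ?a x)\<^sup>2 \<partial>M)"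
    proof (rule indep_integral_fun)
      show "(\<lambda>x. (u ?a x)\<^sup>2) \<in> borel_measurable (N ?a)"
        using u_measN[of ?a ?a] by simp
      show "integrable M (\<lambda>x. (u ?a x)\<^sup>2)"
        using int_prod[OF u_meas u_meas u_dmn u_dmn, of ?a ?a] by (simp add: power2_eq_square)
    qed
    also have "(\<Sum>j\<le>tau. (wfun i1 j * wfun i2 j) * prob {x\<in>space M. ts ?a x = j}) =
        \<alpha> i1 * \<alpha> i2 * (if i1 = i2 then p i1 * (1 - p i1) else - (p i1 * p i2))"
      using S2[OF i1 i2] by (simp add: prob_ts)
    finally show ?thesis using 1 k1 k2 by simp
  next
    case 2
    then show ?thesis using ED_cross[OF i1 i2 k1 k2 2] by simp
  next
    case 3
    have "(\<integral>x. Dt k1 i1 x * Dt k2 i2 x \<partial>M) = (\<integral>x. Dt k2 i2 x * Dt k1 i1 x \<partial>M)"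
      by (simp add: mult.commute)
    also have "\<dots> = 0" using ED_cross[OF i2 i1 k2 k1 3] .
    finally show ?thesis using 3 by simp
  qed
qed

lemma E_dsig:
  "(\<integral>x. dsig tau \<alpha> p ts u k1 x * dsig tau \<alpha> p ts u k2 x \<partial>M) =
   (\<Sum>i1\<le>tau. \<Sum>i2\<le>tau. (if i1 \<le> k1 \<and> i2 \<le> k2 \<and> k1 - i1 = k2 - i2
     then \<alpha> i1 * \<alpha> i2 * (if i1 = i2 then p i1 * (1 - p i1) else - (p i1 * p i2)) * (\<integral>x. (u (k1 - i1) x)\<^sup>2 \<partial>M)
     else 0))"
proof -
  have "(\<integral>x. dsig tau \<alpha> p ts u k1 x * dsig tau \<alpha> p ts u k2 x \<partial>M) =
      (\<integral>x. (\<Sum>i1\<le>tau. \<Sum>i2\<le>tau. Dt k1 i1 x * Dt k2 i2 x) \<partial>M)"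
    by (simp add: dsig_eq sum_product)
  also have "\<dots> = (\<Sum>i1\<le>tau. \<Sum>i2\<le>tau. (\<integral>x. Dt k1 i1 x * Dt k2 i2 x \<partial>M))"
  proof -
    have "(\<integral>x. (\<Sum>i1\<le>tau. \<Sum>i2\<le>tau. Dt k1 i1 x * Dt k2 i2 x) \<partial>M) =
       (\<Sum>i1\<le>tau. (\<integral>x. (\<Sum>i2\<le>tau. Dt k1 i1 x * Dt k2 i2 x) \<partial>M))"
      by (rule Bochner_Integration.integral_sum) (auto intro!: Bochner_Integration.integrable_sum Dt_int)
    also have "\<dots> = (\<Sum>i1\<le>tau. \<Sum>i2\<le>tau. (\<integral>x. Dt k1 i1 x * Dt k2 i2 x \<partial>M))"
      by (intro sum.cong refl Bochner_Integration.integral_sum) (auto intro!: Dt_int)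
    finally show ?thesis .
  qed
  also have "\<dots> = (\<Sum>i1\<le>tau. \<Sum>i2\<le>tau. (if i1 \<le> k1 \<and> i2 \<le> k2 \<and> k1 - i1 = k2 - i2
     then \<alpha> i1 * \<alpha> i2 * (if i1 = i2 then p i1 * (1 - p i1) else - (p i1 * p i2)) * (\<integral>x. (u (k1 - i1) x)\<^sup>2 \<partial>M)
     else 0))"
    by (intro sum.cong refl) (simp add: ED)
  finally show ?thesis .
qed


lemma sig_int: "(\<integral>x. (sig_ext u (int k - int i) x)\<^sup>2 \<partial>M) = (if i \<le> k then (\<integral>x. (u (k - i) x)\<^sup>2 \<partial>M) else 0)"
  by (auto simp: sig_ext_def nat_diff_distrib)

lemma part1:
  "(\<integral>x. (dsig tau \<alpha> p ts u k x)\<^sup>2 \<partial>M) =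
     (\<Sum>i\<le>tau. (\<alpha> i)\<^sup>2 * p i * (1 - p i) * (\<integral>x. (sig_ext u (int k - int i) x)\<^sup>2 \<partial>M))"
proof -
  have "(\<integral>x. (dsig tau \<alpha> p ts u k x)\<^sup>2 \<partial>M) = (\<integral>x. dsig tau \<alpha> p ts u k x * dsig tau \<alpha> p ts u k x \<partial>M)"
    by (simp add: power2_eq_square)
  also have "\<dots> = (\<Sum>i1\<le>tau. \<Sum>i2\<le>tau. (if i1 \<le> k \<and> i2 \<le> k \<and> k - i1 = k - i2
     then \<alpha> i1 * \<alpha> i2 * (if i1 = i2 then p i1 * (1 - p i1) else - (p i1 * p i2)) * (\<integral>x. (u (k - i1) x)\<^sup>2 \<partial>M)
     else 0))" by (rule E_dsig)
  also have "\<dots> = (\<Sum>i\<le>tau. (\<alpha> i)\<^sup>2 * p i * (1 - p i) * (\<integral>x. (sig_ext u (int k - int i) x)\<^sup>2 \<partial>M))"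
  proof (rule sum.cong[OF refl])
    fix i1 assume i1: "i1 \<in> {..tau}"
    have "(\<Sum>i2\<le>tau. (if i1 \<le> k \<and> i2 \<le> k \<and> k - i1 = k - i2
     then \<alpha> i1 * \<alpha> i2 * (if i1 = i2 then p i1 * (1 - p i1) else - (p i1 * p i2)) * (\<integral>x. (u (k - i1) x)\<^sup>2 \<partial>M)
     else 0)) = (\<Sum>i2\<le>tau. (if i2 = i1 then (if i1 \<le> k then (\<alpha> i1)\<^sup>2 * p i1 * (1 - p i1) * (\<integral>x. (u (k - i1) x)\<^sup>2 \<partial>M) else 0) else 0))"
    proof (rule sum.cong[OF refl])
      fix i2
      show "(if i1 \<le> k \<and> i2 \<le> k \<and> k - i1 = k - i2
     then \<alpha> i1 * \<alpha> i2 * (if i1 = i2 then p i1 * (1 - p i1) else - (p i1 * p i2)) * (\<integral>x. (u (k - i1) x)\<^sup>2 \<partial>M)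
     else 0) = (if i2 = i1 then (if i1 \<le> k then (\<alpha> i1)\<^sup>2 * p i1 * (1 - p i1) * (\<integral>x. (u (k - i1) x)\<^sup>2 \<partial>M) else 0) else 0)"
      proof (cases "i2 = i1")
        case True
        then show ?thesis by (simp add: power2_eq_square)
      next
        case False
        have c: "\<not> (i1 \<le> k \<and> i2 \<le> k \<and> k - i1 = k - i2)"
        proof
          assume h: "i1 \<le> k \<and> i2 \<le> k \<and> k - i1 = k - i2"
          then have "i1 = i2" by (metis diff_diff_cancel)
          with False show False by simp
        qed
        show ?thesis unfolding if_not_P[OF c] if_not_P[OF False] ..
      qed
    qed
    also have "\<dots> = (\<alpha> i1)\<^sup>2 * p i1 * (1 - p i1) * (\<integral>x. (sig_ext u (int k - int i1) x)\<^sup>2 \<partial>M)"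
      using i1 by (simp add: sum.delta sig_int)
    finally show "(\<Sum>i2\<le>tau. (if i1 \<le> k \<and> i2 \<le> k \<and> k - i1 = k - i2
     then \<alpha> i1 * \<alpha> i2 * (if i1 = i2 then p i1 * (1 - p i1) else - (p i1 * p i2)) * (\<integral>x. (u (k - i1) x)\<^sup>2 \<partial>M)
     else 0)) = (\<alpha> i1)\<^sup>2 * p i1 * (1 - p i1) * (\<integral>x. (sig_ext u (int k - int i1) x)\<^sup>2 \<partial>M)" .
  qed
  finally show ?thesis .
qed

lemma part2:
  assumes "1 \<le> \<bar>int k1 - int k2\<bar>" "\<bar>int k1 - int k2\<bar> \<le> int tau"
  shows "(\<integral>x. dsig tau \<alpha> p ts u k1 x * dsig tau \<alpha> p ts u k2 x \<partial>M) =
          - (\<Sum>i1\<le>tau. \<Sum>i2\<le>tau.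
               kdelta (int k1 - int i1 - int k2 + int i2) * \<alpha> i1 * \<alpha> i2 * p i1 * p i2 *
               (\<integral>x. (sig_ext u (int k1 - int i1) x)\<^sup>2 \<partial>M))"
proof -
  have "(\<integral>x. dsig tau \<alpha> p ts u k1 x * dsig tau \<alpha> p ts u k2 x \<partial>M) = 
    (\<Sum>i1\<le>tau. \<Sum>i2\<le>tau. (if i1 \<le> k1 \<and> i2 \<le> k2 \<and> k1 - i1 = k2 - i2
     then \<alpha> i1 * \<alpha> i2 * (if i1 = i2 then p i1 * (1 - p i1) else - (p i1 * p i2)) * (\<integral>x. (u (k1 - i1) x)\<^sup>2 \<partial>M)
     else 0))" by (rule E_dsig)
  also have "\<dots> = (\<Sum>i1\<le>tau. \<Sum>i2\<le>tau. - (
               kdelta (int k1 - int i1 - int k2 + int i2) * \<alpha> i1 * \<alpha> i2 * p i1 * p i2 *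
               (\<integral>x. (sig_ext u (int k1 - int i1) x)\<^sup>2 \<partial>M)))"
  proof (intro sum.cong refl)
    fix i1 i2
    show "(if i1 \<le> k1 \<and> i2 \<le> k2 \<and> k1 - i1 = k2 - i2
     then \<alpha> i1 * \<alpha> i2 * (if i1 = i2 then p i1 * (1 - p i1) else - (p i1 * p i2)) * (\<integral>x. (u (k1 - i1) x)\<^sup>2 \<partial>M)
     else 0) = - (kdelta (int k1 - int i1 - int k2 + int i2) * \<alpha> i1 * \<alpha> i2 * p i1 * p i2 *
               (\<integral>x. (sig_ext u (int k1 - int i1) x)\<^sup>2 \<partial>M))"
    proof (cases "i1 \<le> k1 \<and> i2 \<le> k2 \<and> k1 - i1 = k2 - i2")
      case True
      have "i1 \<noteq> i2"
      proof
        assume "i1 = i2"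
        with True have "int k1 - int i1 = int k2 - int i2" "int i1 = int i2"
          by (auto simp flip: of_nat_diff)
        then have "int k1 = int k2" by linarith
        with assms show False by simp
      qed
      moreover have "kdelta (int k1 - int i1 - int k2 + int i2) = 1" using True by (auto simp: kdelta_def)
      ultimately show ?thesis using True by (simp add: sig_int)
    next
      case False
      show ?thesis
      proof (cases "int k1 - int i1 - int k2 + int i2 = 0")
        case True
        have "\<not> i1 \<le> k1"
        proof
          assume h: "i1 \<le> k1"
          then have "int i1 \<le> int k1" by simp
          with True have "int i2 \<le> int k2" by linarith
          then have h2: "i2 \<le> k2" by simp
          have e1: "int (k1 - i1) = int k1 - int i1" using h by (simp add: of_nat_diff)
          have e2: "int (k2 - i2) = int k2 - int i2" using h2 by (simp add: of_nat_diff)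
          have "int (k1 - i1) = int (k2 - i2)" unfolding e1 e2 using True by linarith
          then have "k1 - i1 = k2 - i2" by (simp only: of_nat_eq_iff)
          with h h2 False show False by simp
        qed
        then show ?thesis unfolding if_not_P[OF False] by (simp add: sig_int)
      next
        case F2: False
        then show ?thesis unfolding if_not_P[OF False] by (simp add: kdelta_def)
      qed
    qed
  qed
  also have "\<dots> = - (\<Sum>i1\<le>tau. \<Sum>i2\<le>tau.
               kdelta (int k1 - int i1 - int k2 + int i2) * \<alpha> i1 * \<alpha> i2 * p i1 * p i2 *
               (\<integral>x. (sig_ext u (int k1 - int i1) x)\<^sup>2 \<partial>M))"
    by (simp add: sum_negf)
  finally show ?thesis .
qed

lemma part3:
  assumes "\<bar>int k1 - int k2\<bar> > int tau"
  shows "(\<integral>x. dsig tau \<alpha> p ts u k1 x * dsig tau \<alpha> p ts u k2 x \<partial>M) = 0"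
proof -
  have "(\<integral>x. dsig tau \<alpha> p ts u k1 x * dsig tau \<alpha> p ts u k2 x \<partial>M) = 
    (\<Sum>i1\<le>tau. \<Sum>i2\<le>tau. (if i1 \<le> k1 \<and> i2 \<le> k2 \<and> k1 - i1 = k2 - i2
     then \<alpha> i1 * \<alpha> i2 * (if i1 = i2 then p i1 * (1 - p i1) else - (p i1 * p i2)) * (\<integral>x. (u (k1 - i1) x)\<^sup>2 \<partial>M)
     else 0))" by (rule E_dsig)
  also have "\<dots> = (\<Sum>i1\<le>tau. \<Sum>i2\<le>tau. (0::real))"
  proof (intro sum.cong refl)
    fix i1 i2 assume "i1 \<in> {..tau}" "i2 \<in> {..tau}"
    then have "i1 \<le> tau" "i2 \<le> tau" by auto
    have c: "\<not> (i1 \<le> k1 \<and> i2 \<le> k2 \<and> k1 - i1 = k2 - i2)"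
    proof
      assume h: "i1 \<le> k1 \<and> i2 \<le> k2 \<and> k1 - i1 = k2 - i2"
      then have e: "int (k1 - i1) = int (k2 - i2)" by (intro arg_cong[where f=int]) blast
      have e1: "int (k1 - i1) = int k1 - int i1" by (rule of_nat_diff) (use h in blast)
      have e2: "int (k2 - i2) = int k2 - int i2" by (rule of_nat_diff) (use h in blast)
      have "int k1 - int k2 = int i1 - int i2" using e e1 e2 by linarith
      moreover have "int i1 \<le> int tau" "int i2 \<le> int tau" using \<open>i1 \<le> tau\<close> \<open>i2 \<le> tau\<close> by simp_all
      ultimately have "\<bar>int k1 - int k2\<bar> \<le> int tau" by linarith
      with assms show False by simp
    qed
    show "(if i1 \<le> k1 \<and> i2 \<le> k2 \<and> k1 - i1 = k2 - i2
     then \<alpha> i1 * \<alpha> i2 * (if i1 = i2 then p i1 * (1 - p i1) else - (p i1 * p i2)) * (\<integral>x. (u (k1 - i1) x)\<^sup>2 \<partial>M)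
     else 0) = 0" by (simp only: if_not_P[OF c])
  qed
  finally show ?thesis by simp
qed

end

theorem lemma5:
  fixes M :: "'a measure"
    and tau :: nat
    and \<alpha> p :: "nat \<Rightarrow> real"
    and ts :: "nat \<Rightarrow> 'a \<Rightarrow> nat"
    and v u y ud :: "nat \<Rightarrow> 'a \<Rightarrow> real"
    and AP :: "real^'n^'n" and BP CP :: "real^'n" and xP :: "nat \<Rightarrow> 'a \<Rightarrow> real^'n"
    and AK :: "real^'m^'m" and BK CK :: "real^'m" and DK :: real
    and xK :: "nat \<Rightarrow> 'a \<Rightarrow> real^'m"
  assumes M: "prob_space M"
    (* i.i.d. delay sequence with values in {0..tau}, Pr{tau_n = i} = p_i *)
    and ts_range: "\<And>n x. x \<in> space M \<Longrightarrow> ts n x \<le> tau"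
    and ts_indep: "prob_space.indep_vars M (\<lambda>_. count_space UNIV) ts UNIV"
    and ts_dist: "\<And>n i. i \<le> tau \<Longrightarrow> measure M {x \<in> space M. ts n x = i} = p i"
    and p_sum: "(\<Sum>i\<le>tau. p i) = 1"
    (* v: zero-mean white noise (independent values) with bounded variances *)
    and v_indep: "prob_space.indep_vars M (\<lambda>_. borel) v UNIV"
    and v_int: "\<And>k. integrable M (\<lambda>x. (v k x)\<^sup>2)"
    and v_mean: "\<And>k. integral\<^sup>L M (v k) = 0"
    and v_bdd: "\<exists>B. \<forall>k. prob_space.variance M (v k) \<le> B"
    (* {tau_n} independent of {v(k)} *)
    and ts_v_indep: "prob_space.indep_var M
        (Pi\<^sub>M UNIV (\<lambda>_. borel)) (\<lambda>x. (\<lambda>n. real (ts n x)) :: nat \<Rightarrow> real)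
        (Pi\<^sub>M UNIV (\<lambda>_. borel)) (\<lambda>x. (\<lambda>k. v k x) :: nat \<Rightarrow> real)"
    (* strictly proper plant P (state space, zero feedthrough), at rest at k = 0,
       plant input v - u_d, plant output y *)
    and xP0: "\<And>x. xP 0 x = 0"
    and xPS: "\<And>k x. xP (Suc k) x = AP *v xP k x + (v k x - ud k x) *\<^sub>R BP"
    and yP: "\<And>k x. y k x = CP \<bullet> xP k x"
    (* proper controller K, u = K y, at rest at k = 0 *)
    and xK0: "\<And>x. xK 0 x = 0"
    and xKS: "\<And>k x. xK (Suc k) x = AK *v xK k x + y k x *\<^sub>R BK"
    and uK: "\<And>k x. u k x = CK \<bullet> xK k x + DK * y k x"
    (* channel *)
    and ud_def: "\<And>k x. ud k x =
        (\<Sum>i\<le>tau. \<alpha> i * kdelta (int (ts (k - i) x) - int i) * sig_ext u (int k - int i) x)"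
  shows
    "(\<forall>k. integral\<^sup>L M (\<lambda>x. (dsig tau \<alpha> p ts u k x)\<^sup>2) =
          (\<Sum>i\<le>tau. (\<alpha> i)\<^sup>2 * p i * (1 - p i) *
              integral\<^sup>L M (\<lambda>x. (sig_ext u (int k - int i) x)\<^sup>2)))
     \<and> (\<forall>k1 k2. 1 \<le> \<bar>int k1 - int k2\<bar> \<and> \<bar>int k1 - int k2\<bar> \<le> int tau \<longrightarrow>
          integral\<^sup>L M (\<lambda>x. dsig tau \<alpha> p ts u k1 x * dsig tau \<alpha> p ts u k2 x) =
          - (\<Sum>i1\<le>tau. \<Sum>i2\<le>tau.
               kdelta (int k1 - int i1 - int k2 + int i2) * \<alpha> i1 * \<alpha> i2 * p i1 * p i2 *
               integral\<^sup>L M (\<lambda>x. (sig_ext u (int k1 - int i1) x)\<^sup>2)))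
     \<and> (\<forall>k1 k2. \<bar>int k1 - int k2\<bar> > int tau \<longrightarrow>
          integral\<^sup>L M (\<lambda>x. dsig tau \<alpha> p ts u k1 x * dsig tau \<alpha> p ts u k2 x) = 0)"
proof -
  interpret L: L5 M tau \<alpha> p ts v u y ud AP BP CP xP AK BK CK DK xK
    by (intro L5.intro L5_axioms.intro M) (use assms in auto)
  show ?thesis using L.part1 L.part2 L.part3 by blast
qed

end
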